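(* Let $X$ be a regular Hausdorff space with countable pseudocharacter (every point is a $G_\delta$-set). Then the following are equivalent: (1) $X$ is semi-metrizable; (2) $\mathcal{F}(X)$ is symmetrizable; (3) $\mathcal{F}(X)$ is semi-metrizable.
   Context: $\mathcal{F}(X)$ is the set of nonempty finite subsets of $X$ with the Vietoris topology (base: $\langle U_1,\dots,U_k\rangle=\{A: A\subset\bigcup_i U_i,\ A\cap U_j\neq\emptyset\ \forall j\}$, $U_i$ open in $X$). A symmetric on a set $Y$ is a function $d:Y\times Y\to[0,\infty)$ with $d(x,y)=0\iff x=y$ and $d(x,y)=d(y,x)$; put $B(x,\varepsilon)=\{y: d(x,y)<\varepsilon\}$. $Y$ is symmetrizable if there is a symmetric $d$ such that $U\subset Y$ is open iff for each $x\in U$ some $B(x,\varepsilon)\subset U$; $Y$ is semi-metrizable if there is a symmetric $d$ such that for every $x$, $\{B(x,\varepsilon):\varepsilon>0\}$ is a neighborhood base at $x$. *)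

theory Defs
  imports "HOL-Analysis.Analysis"
begin

definition fin_subsets :: "'a topology \<Rightarrow> 'a set set" where
  "fin_subsets X = {A. finite A \<and> A \<noteq> {} \<and> A \<subseteq> topspace X}"

definition vietoris_basic :: "'a topology \<Rightarrow> 'a set list \<Rightarrow> 'a set set" where
  "vietoris_basic X Us =
     {A \<in> fin_subsets X. A \<subseteq> \<Union>(set Us) \<and> (\<forall>U\<in>set Us. A \<inter> U \<noteq> {})}"

text \<open>The Vietoris topology on F(X): generated by the base of all < U_1,...,U_k >
  with U_i open in X (a base generates the same topology as a subbase).\<close>
definition vietoris_fin :: "'a topology \<Rightarrow> 'a set topology" where
  "vietoris_fin X = topology_generated_by
     {vietoris_basic X Us | Us. \<forall>U\<in>set Us. openin X U}"

definition is_symmetric_on :: "'b set \<Rightarrow> ('b \<Rightarrow> 'b \<Rightarrow> real) \<Rightarrow> bool" where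
  "is_symmetric_on S d \<longleftrightarrow>
     (\<forall>x\<in>S. \<forall>y\<in>S. d x y \<ge> 0 \<and> (d x y = 0 \<longleftrightarrow> x = y) \<and> d x y = d y x)"

definition sball :: "'b topology \<Rightarrow> ('b \<Rightarrow> 'b \<Rightarrow> real) \<Rightarrow> 'b \<Rightarrow> real \<Rightarrow> 'b set" where
  "sball T d x e = {y \<in> topspace T. d x y < e}"

definition symmetrizable :: "'b topology \<Rightarrow> bool" where
  "symmetrizable T \<longleftrightarrow> (\<exists>d. is_symmetric_on (topspace T) d \<and>
     (\<forall>U. openin T U \<longleftrightarrow>
          U \<subseteq> topspace T \<and> (\<forall>x\<in>U. \<exists>e>0. sball T d x e \<subseteq> U)))"

definition semi_metrizable :: "'b topology \<Rightarrow> bool" where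
  "semi_metrizable T \<longleftrightarrow> (\<exists>d. is_symmetric_on (topspace T) d \<and>
     (\<forall>x\<in>topspace T.
        (\<forall>e>0. \<exists>V. openin T V \<and> x \<in> V \<and> V \<subseteq> sball T d x e) \<and>
        (\<forall>U. openin T U \<and> x \<in> U \<longrightarrow> (\<exists>e>0. sball T d x e \<subseteq> U))))"

definition countable_pseudocharacter :: "'a topology \<Rightarrow> bool" where
  "countable_pseudocharacter X \<longleftrightarrow> (\<forall>x\<in>topspace X. \<exists>\<U>. countable \<U> \<and> \<U> \<noteq> {} \<and>
     (\<forall>U\<in>\<U>. openin X U) \<and> \<Inter>\<U> = {x})"

end

theory Submission
  imports Defs
begin

lemma vt_topspace: "topspace (vietoris_fin X) = fin_subsets X"
proof -
  have "\<Union>{vietoris_basic X Us | Us. \<forall>U\<in>set Us. openin X U} = fin_subsets X"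
  proof
    show "\<Union>{vietoris_basic X Us | Us. \<forall>U\<in>set Us. openin X U} \<subseteq> fin_subsets X"
      by (auto simp: vietoris_basic_def)
  next
    show "fin_subsets X \<subseteq> \<Union>{vietoris_basic X Us | Us. \<forall>U\<in>set Us. openin X U}"
    proof
      fix E assume E: "E \<in> fin_subsets X"
      have "E \<in> vietoris_basic X [topspace X]"
        using E by (auto simp: vietoris_basic_def fin_subsets_def)
      then show "E \<in> \<Union>{vietoris_basic X Us | Us. \<forall>U\<in>set Us. openin X U}"
        by (intro UnionI[of "vietoris_basic X [topspace X]"]) auto
    qed
  qed
  then show ?thesis unfolding vietoris_fin_def by simp
qed

lemma vt_basic_open:
  "(\<forall>U\<in>set Us. openin X U) \<Longrightarrow> openin (vietoris_fin X) (vietoris_basic X Us)"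
  unfolding vietoris_fin_def by (rule topology_generated_by_Basis) blast

lemma vt_nbhd_singleton:
  assumes "openin (vietoris_fin X) Q" "p \<in> topspace X" "{p} \<in> Q"
  shows "\<exists>V. openin X V \<and> p \<in> V \<and> (\<forall>E\<in>fin_subsets X. E \<subseteq> V \<longrightarrow> E \<in> Q)"
proof -
  have "generate_topology_on {vietoris_basic X Us | Us. \<forall>U\<in>set Us. openin X U} Q"
    using assms(1) unfolding vietoris_fin_def by (rule openin_topology_generated_by)
  then have "\<forall>p\<in>topspace X. {p} \<in> Q \<longrightarrow> (\<exists>V. openin X V \<and> p \<in> V \<and> (\<forall>E\<in>fin_subsets X. E \<subseteq> V \<longrightarrow> E \<in> Q))"
  proof (induction rule: generate_topology_on.induct)
    case Empty
    then show ?case by simp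
  next
    case (Int a b)
    show ?case
    proof (intro ballI impI)
      fix p assume p: "p \<in> topspace X" "{p} \<in> a \<inter> b"
      obtain V1 where V1: "openin X V1" "p \<in> V1" "\<forall>E\<in>fin_subsets X. E \<subseteq> V1 \<longrightarrow> E \<in> a"
        using Int.IH(1) p by blast
      obtain V2 where V2: "openin X V2" "p \<in> V2" "\<forall>E\<in>fin_subsets X. E \<subseteq> V2 \<longrightarrow> E \<in> b"
        using Int.IH(2) p by blast
      show "\<exists>V. openin X V \<and> p \<in> V \<and> (\<forall>E\<in>fin_subsets X. E \<subseteq> V \<longrightarrow> E \<in> a \<inter> b)"
        by (rule exI[of _ "V1 \<inter> V2"]) (use V1 V2 in auto)
    qed
  next
    case (UN K)
    show ?case
    proof (intro ballI impI)
      fix p assume p: "p \<in> topspace X" "{p} \<in> \<Union>K"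
      then obtain k where k: "k \<in> K" "{p} \<in> k" by blast
      obtain V where V: "openin X V" "p \<in> V" "\<forall>E\<in>fin_subsets X. E \<subseteq> V \<longrightarrow> E \<in> k"
        using UN.IH[OF k(1)] p k by blast
      show "\<exists>V. openin X V \<and> p \<in> V \<and> (\<forall>E\<in>fin_subsets X. E \<subseteq> V \<longrightarrow> E \<in> \<Union>K)"
        by (rule exI[of _ V]) (use V k in auto)
    qed
  next
    case (Basis s)
    then obtain Us where s: "s = vietoris_basic X Us" and Us: "\<forall>U\<in>set Us. openin X U" by blast
    show ?case
    proof (intro ballI impI)
      fix p assume p: "p \<in> topspace X" "{p} \<in> s"
      then have pU: "p \<in> \<Union>(set Us)" "\<forall>U\<in>set Us. p \<in> U"
        by (auto simp: s vietoris_basic_def)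
      then have ne: "set Us \<noteq> {}" by auto
      have op: "openin X (\<Inter>(set Us))"
        using Us ne by (intro openin_Inter) auto
      show "\<exists>V. openin X V \<and> p \<in> V \<and> (\<forall>E\<in>fin_subsets X. E \<subseteq> V \<longrightarrow> E \<in> s)"
      proof (rule exI[of _ "\<Inter>(set Us)"], intro conjI ballI impI)
        show "openin X (\<Inter>(set Us))" by (rule op)
        show "p \<in> \<Inter>(set Us)" using pU by auto
        fix E assume E: "E \<in> fin_subsets X" "E \<subseteq> \<Inter>(set Us)"
        obtain U0 where U0: "U0 \<in> set Us" using ne by (metis ex_in_conv)
        have "E \<subseteq> \<Union>(set Us)" using E(2) U0 by blast
        moreover have "\<forall>U\<in>set Us. E \<inter> U \<noteq> {}" using E unfolding fin_subsets_def by blast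
        ultimately show "E \<in> s" using E(1) unfolding s vietoris_basic_def by blast
      qed
    qed
  qed
  then show ?thesis using assms by blast
qed

lemma semi_imp_sym: "semi_metrizable T \<Longrightarrow> symmetrizable T"
proof -
  assume "semi_metrizable T"
  then obtain d where sym: "is_symmetric_on (topspace T) d"
    and H: "\<forall>x\<in>topspace T. (\<forall>e>0. \<exists>V. openin T V \<and> x \<in> V \<and> V \<subseteq> sball T d x e) \<and>
              (\<forall>U. openin T U \<and> x \<in> U \<longrightarrow> (\<exists>e>0. sball T d x e \<subseteq> U))"
    unfolding semi_metrizable_def by blast
  have "openin T U \<longleftrightarrow> U \<subseteq> topspace T \<and> (\<forall>x\<in>U. \<exists>e>0. sball T d x e \<subseteq> U)" for U
  proof
    assume "openin T U"
    show "U \<subseteq> topspace T \<and> (\<forall>x\<in>U. \<exists>e>0. sball T d x e \<subseteq> U)"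
    proof
      show "U \<subseteq> topspace T" using \<open>openin T U\<close> by (rule openin_subset)
      show "\<forall>x\<in>U. \<exists>e>0. sball T d x e \<subseteq> U"
      proof
        fix x assume "x \<in> U"
        then have "x \<in> topspace T" using \<open>U \<subseteq> topspace T\<close> by blast
        then have "\<forall>U. openin T U \<and> x \<in> U \<longrightarrow> (\<exists>e>0. sball T d x e \<subseteq> U)" using H by blast
        then show "\<exists>e>0. sball T d x e \<subseteq> U" using \<open>openin T U\<close> \<open>x \<in> U\<close> by blast
      qed
    qed
  next
    assume R: "U \<subseteq> topspace T \<and> (\<forall>x\<in>U. \<exists>e>0. sball T d x e \<subseteq> U)"
    show "openin T U"
    proof (subst openin_subopen, intro ballI)
      fix x assume x: "x \<in> U"
      then obtain e where e: "e > 0" "sball T d x e \<subseteq> U" using R by blast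
      have "x \<in> topspace T" using R x by blast
      then have "\<forall>e>0. \<exists>V. openin T V \<and> x \<in> V \<and> V \<subseteq> sball T d x e" using H by blast
      then obtain V where "openin T V" "x \<in> V" "V \<subseteq> sball T d x e"
        using e(1) by blast
      then show "\<exists>T'. openin T T' \<and> x \<in> T' \<and> T' \<subseteq> U" using e by blast
    qed
  qed
  then show ?thesis unfolding symmetrizable_def using sym by blast
qed


definition hdist :: "('a \<Rightarrow> 'a \<Rightarrow> real) \<Rightarrow> 'a set \<Rightarrow> 'a set \<Rightarrow> real" where
  "hdist d A B = max (Max ((\<lambda>a. Min ((\<lambda>b. d a b) ` B)) ` A)) (Max ((\<lambda>b. Min ((\<lambda>a. d a b) ` A)) ` B))"

lemma hdist_less:
  assumes "finite A" "A \<noteq> {}" "finite B" "B \<noteq> {}"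
  shows "hdist d A B < e \<longleftrightarrow> (\<forall>a\<in>A. \<exists>b\<in>B. d a b < e) \<and> (\<forall>b\<in>B. \<exists>a\<in>A. d a b < e)"
  using assms by (simp add: hdist_def Max_less_iff Min_less_iff)

lemma hdist_le:
  assumes "finite A" "A \<noteq> {}" "finite B" "B \<noteq> {}"
  shows "hdist d A B \<le> e \<longleftrightarrow> (\<forall>a\<in>A. \<exists>b\<in>B. d a b \<le> e) \<and> (\<forall>b\<in>B. \<exists>a\<in>A. d a b \<le> e)"
  using assms by (simp add: hdist_def Max_le_iff Min_le_iff)

lemma hdist_ge:
  assumes "finite A" "A \<noteq> {}" "finite B" "B \<noteq> {}"
  shows "e \<le> hdist d A B \<longleftrightarrow> (\<exists>a\<in>A. \<forall>b\<in>B. e \<le> d a b) \<or> (\<exists>b\<in>B. \<forall>a\<in>A. e \<le> d a b)"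
  using assms by (simp add: hdist_def le_max_iff_disj Max_ge_iff Min_ge_iff)


lemma hdist_lessI:
  assumes "finite A" "A \<noteq> {}" "finite B" "B \<noteq> {}"
    "\<And>a. a \<in> A \<Longrightarrow> \<exists>b\<in>B. d a b < e" "\<And>b. b \<in> B \<Longrightarrow> \<exists>a\<in>A. d a b < e"
  shows "hdist d A B < e"
  using assms(5,6) hdist_less[OF assms(1-4), of d e] by simp

lemma hdist_lessD:
  assumes "finite A" "A \<noteq> {}" "finite B" "B \<noteq> {}" "hdist d A B < e"
  shows "\<And>a. a \<in> A \<Longrightarrow> \<exists>b\<in>B. d a b < e" "\<And>b. b \<in> B \<Longrightarrow> \<exists>a\<in>A. d a b < e"
  using assms(5) hdist_less[OF assms(1-4), of d e] by simp_all

lemma hdist_leI: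
  assumes "finite A" "A \<noteq> {}" "finite B" "B \<noteq> {}"
    "\<And>a. a \<in> A \<Longrightarrow> \<exists>b\<in>B. d a b \<le> e" "\<And>b. b \<in> B \<Longrightarrow> \<exists>a\<in>A. d a b \<le> e"
  shows "hdist d A B \<le> e"
  using assms(5,6) hdist_le[OF assms(1-4), of d e] by simp

lemma hdist_leD:
  assumes "finite A" "A \<noteq> {}" "finite B" "B \<noteq> {}" "hdist d A B \<le> e"
  shows "\<And>a. a \<in> A \<Longrightarrow> \<exists>b\<in>B. d a b \<le> e" "\<And>b. b \<in> B \<Longrightarrow> \<exists>a\<in>A. d a b \<le> e"
  using assms(5) hdist_le[OF assms(1-4), of d e] by simp_all

lemma hdist_geI:
  assumes "finite A" "A \<noteq> {}" "finite B" "B \<noteq> {}" "a \<in> A" "\<And>b. b \<in> B \<Longrightarrow> e \<le> d a b"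
  shows "e \<le> hdist d A B"
  using assms(5,6) hdist_ge[OF assms(1-4), of e d] by auto

lemma hdist_symmetric:
  assumes sym: "is_symmetric_on (topspace X) d"
  shows "is_symmetric_on (fin_subsets X) (hdist d)"
  unfolding is_symmetric_on_def
proof (intro ballI conjI)
  fix A B assume A: "A \<in> fin_subsets X" and B: "B \<in> fin_subsets X"
  have fA: "finite A" "A \<noteq> {}" "A \<subseteq> topspace X" and fB: "finite B" "B \<noteq> {}" "B \<subseteq> topspace X"
    using A B by (auto simp: fin_subsets_def)
  have dsym: "d a b = d b a" "d a b \<ge> 0" "d a b = 0 \<longleftrightarrow> a = b" if "a \<in> topspace X" "b \<in> topspace X" for a b
    using sym that unfolding is_symmetric_on_def by auto
  have nonneg: "0 \<le> hdist d A B"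
  proof -
    obtain a where a: "a \<in> A" using fA by blast
    show ?thesis
    proof (rule hdist_geI[OF fA(1,2) fB(1,2) a])
      fix b assume "b \<in> B"
      then show "0 \<le> d a b" using dsym(2)[of a b] a fA fB by blast
    qed
  qed
  show "0 \<le> hdist d A B" by (rule nonneg)
  show "hdist d A B = 0 \<longleftrightarrow> A = B"
  proof
    assume h: "hdist d A B = 0"
    then have hl: "hdist d A B \<le> 0" by simp
    have "A \<subseteq> B"
    proof
      fix a assume a: "a \<in> A"
      then obtain b where b: "b \<in> B" "d a b \<le> 0" using hdist_leD(1)[OF fA(1,2) fB(1,2) hl] by blast
      have "a \<in> topspace X" "b \<in> topspace X" using a b fA fB by blast+
      then have "a = b" using dsym[of a b] b(2) by linarith
      then show "a \<in> B" using b by simp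
    qed
    moreover have "B \<subseteq> A"
    proof
      fix b assume b: "b \<in> B"
      then obtain a where a: "a \<in> A" "d a b \<le> 0" using hdist_leD(2)[OF fA(1,2) fB(1,2) hl] by blast
      have "a \<in> topspace X" "b \<in> topspace X" using a b fA fB by blast+
      then have "a = b" using dsym[of a b] a(2) by linarith
      then show "b \<in> A" using a by simp
    qed
    ultimately show "A = B" by blast
  next
    assume AB: "A = B"
    have "hdist d A B \<le> 0"
    proof (rule hdist_leI[OF fA(1,2) fB(1,2)])
      fix a assume a: "a \<in> A"
      then have "a \<in> B" "d a a = 0" using AB dsym(3)[of a a] fA by auto
      then show "\<exists>b\<in>B. d a b \<le> 0" by force
    next
      fix b assume b: "b \<in> B"
      then have "b \<in> A" "d b b = 0" using AB dsym(3)[of b b] fB by auto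
      then show "\<exists>a\<in>A. d a b \<le> 0" by force
    qed
    then show "hdist d A B = 0" using nonneg by linarith
  qed
  show "hdist d A B = hdist d B A"
  proof -
    have ds: "d a b = d b a" if "a \<in> A" "b \<in> B" for a b
      using dsym(1)[of a b] that fA fB by blast
    have e1: "(\<lambda>a. Min ((\<lambda>b. d a b) ` B)) ` A = (\<lambda>a. Min ((\<lambda>b. d b a) ` B)) ` A"
    proof (rule image_cong[OF refl])
      fix a assume a: "a \<in> A"
      have "(\<lambda>b. d a b) ` B = (\<lambda>b. d b a) ` B"
        by (rule image_cong[OF refl]) (use ds a in blast)
      then show "Min ((\<lambda>b. d a b) ` B) = Min ((\<lambda>b. d b a) ` B)" by simp
    qed
    have e2: "(\<lambda>b. Min ((\<lambda>a. d a b) ` A)) ` B = (\<lambda>b. Min ((\<lambda>a. d b a) ` A)) ` B"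
    proof (rule image_cong[OF refl])
      fix b assume b: "b \<in> B"
      have "(\<lambda>a. d a b) ` A = (\<lambda>a. d b a) ` A"
        by (rule image_cong[OF refl]) (use ds b in blast)
      then show "Min ((\<lambda>a. d a b) ` A) = Min ((\<lambda>a. d b a) ` A)" by simp
    qed
    show ?thesis unfolding hdist_def e1 e2 by (simp add: max.commute)
  qed
qed

lemma semi_imp_vt_semi:
  assumes "semi_metrizable X"
  shows "semi_metrizable (vietoris_fin X)"
proof -
  obtain d where sym: "is_symmetric_on (topspace X) d"
    and H: "\<forall>x\<in>topspace X. (\<forall>e>0. \<exists>V. openin X V \<and> x \<in> V \<and> V \<subseteq> sball X d x e) \<and>
        (\<forall>U. openin X U \<and> x \<in> U \<longrightarrow> (\<exists>e>0. sball X d x e \<subseteq> U))"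
    using assms unfolding semi_metrizable_def by auto
  have H1: "\<exists>V. openin X V \<and> x \<in> V \<and> V \<subseteq> sball X d x e" if "x \<in> topspace X" "e > 0" for x e
  proof -
    have "\<forall>e>0. \<exists>V. openin X V \<and> x \<in> V \<and> V \<subseteq> sball X d x e" using H that(1) by blast
    then show ?thesis using that(2) by blast
  qed
  have H2: "\<exists>e>0. sball X d x e \<subseteq> U" if "x \<in> topspace X" "openin X U" "x \<in> U" for x U
  proof -
    have "\<forall>U. openin X U \<and> x \<in> U \<longrightarrow> (\<exists>e>0. sball X d x e \<subseteq> U)" using H that(1) by blast
    then show ?thesis using that(2,3) by blast
  qed
  let ?D = "hdist d"
  have C1: "\<exists>V. openin (vietoris_fin X) V \<and> A \<in> V \<and> V \<subseteq> sball (vietoris_fin X) ?D A e"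
    if A: "A \<in> fin_subsets X" and e: "e > 0" for A e
  proof -
    have fA: "finite A" "A \<noteq> {}" "A \<subseteq> topspace X" using A by (auto simp: fin_subsets_def)
    have "\<forall>a\<in>A. \<exists>V. openin X V \<and> a \<in> V \<and> V \<subseteq> sball X d a e"
      using H1 fA e by blast
    then obtain V where V: "\<And>a. a \<in> A \<Longrightarrow> openin X (V a) \<and> a \<in> V a \<and> V a \<subseteq> sball X d a e"
      by metis
    obtain xs where xs: "set xs = A" using finite_list[OF fA(1)] by blast
    let ?W = "vietoris_basic X (map V xs)"
    have op: "openin (vietoris_fin X) ?W"
      by (rule vt_basic_open) (use V xs in auto)
    have inA: "A \<in> ?W"
      using A V xs unfolding vietoris_basic_def by auto
    have sub: "?W \<subseteq> sball (vietoris_fin X) ?D A e"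
    proof
      fix E assume E: "E \<in> ?W"
      then have EF: "E \<in> fin_subsets X" and E1: "E \<subseteq> \<Union>(V ` A)" and E2: "\<forall>a\<in>A. E \<inter> V a \<noteq> {}"
        using xs unfolding vietoris_basic_def by auto
      have fE: "finite E" "E \<noteq> {}" "E \<subseteq> topspace X" using EF by (auto simp: fin_subsets_def)
      have "\<forall>a\<in>A. \<exists>b\<in>E. d a b < e"
      proof
        fix a assume a: "a \<in> A"
        then obtain b where "b \<in> E" "b \<in> V a" using E2 by blast
        then show "\<exists>b\<in>E. d a b < e" using V[OF a] unfolding sball_def by blast
      qed
      moreover have "\<forall>b\<in>E. \<exists>a\<in>A. d a b < e"
      proof
        fix b assume b: "b \<in> E"
        then obtain a where "a \<in> A" "b \<in> V a" using E1 by blast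
        then show "\<exists>a\<in>A. d a b < e" using V unfolding sball_def by blast
      qed
      ultimately have "?D A E < e" using hdist_lessI[OF fA(1,2) fE(1,2)] by blast
      then show "E \<in> sball (vietoris_fin X) ?D A e"
        using EF unfolding sball_def vt_topspace by blast
    qed
    show ?thesis using op inA sub by blast
  qed
  have C2: "\<forall>A\<in>Q. \<exists>e>0. sball (vietoris_fin X) ?D A e \<subseteq> Q"
    if "openin (vietoris_fin X) Q" for Q
  proof -
    have "generate_topology_on {vietoris_basic X Us | Us. \<forall>U\<in>set Us. openin X U} Q"
      using that unfolding vietoris_fin_def by (rule openin_topology_generated_by)
    then show ?thesis
    proof (induction rule: generate_topology_on.induct)
      case Empty
      then show ?case by simp
    next
      case (Int a b)
      show ?case
      proof
        fix A assume "A \<in> a \<inter> b"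
        then obtain e1 e2 where "e1 > 0" "sball (vietoris_fin X) ?D A e1 \<subseteq> a"
          "e2 > 0" "sball (vietoris_fin X) ?D A e2 \<subseteq> b"
          using Int.IH by blast
        then show "\<exists>e>0. sball (vietoris_fin X) ?D A e \<subseteq> a \<inter> b"
          by (intro exI[of _ "min e1 e2"]) (auto simp: sball_def)
      qed
    next
      case (UN K)
      show ?case
      proof
        fix A assume "A \<in> \<Union>K"
        then obtain k where k: "k \<in> K" "A \<in> k" by blast
        then obtain e where "e > 0" "sball (vietoris_fin X) ?D A e \<subseteq> k"
          using UN.IH by blast
        then show "\<exists>e>0. sball (vietoris_fin X) ?D A e \<subseteq> \<Union>K" using k by blast
      qed
    next
      case (Basis s)
      then obtain Us where s: "s = vietoris_basic X Us" and Us: "\<forall>U\<in>set Us. openin X U" by blast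
      show ?case
      proof
        fix A assume As: "A \<in> s"
        then have AF: "A \<in> fin_subsets X" and A1: "A \<subseteq> \<Union>(set Us)" and A2: "\<forall>U\<in>set Us. A \<inter> U \<noteq> {}"
          by (auto simp: s vietoris_basic_def)
        have fA: "finite A" "A \<noteq> {}" "A \<subseteq> topspace X" using AF by (auto simp: fin_subsets_def)
        define G where "G a = \<Inter>{U \<in> set Us. a \<in> U}" for a
        have G: "openin X (G a) \<and> a \<in> G a" if a: "a \<in> A" for a
        proof -
          have ne: "{U \<in> set Us. a \<in> U} \<noteq> {}" using A1 a by blast
          have "openin X (G a)" unfolding G_def using Us ne by (intro openin_Inter) auto
          then show ?thesis unfolding G_def by auto
        qed
        have "\<forall>a\<in>A. \<exists>e>0. sball X d a e \<subseteq> G a"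
          using H2 G fA by blast
        then obtain ea where ea: "\<And>a. a \<in> A \<Longrightarrow> ea a > 0 \<and> sball X d a (ea a) \<subseteq> G a"
          by metis
        define e where "e = Min (ea ` A)"
        have epos: "e > 0" unfolding e_def using fA ea by (subst Min_gr_iff) auto
        have ele: "e \<le> ea a" if "a \<in> A" for a unfolding e_def using fA that by auto
        have "sball (vietoris_fin X) ?D A e \<subseteq> s"
        proof
          fix E assume E: "E \<in> sball (vietoris_fin X) ?D A e"
          then have EF: "E \<in> fin_subsets X" and DE: "?D A E < e"
            unfolding sball_def vt_topspace by auto
          have fE: "finite E" "E \<noteq> {}" "E \<subseteq> topspace X" using EF by (auto simp: fin_subsets_def)
          have H: "(\<forall>a\<in>A. \<exists>b\<in>E. d a b < e) \<and> (\<forall>b\<in>E. \<exists>a\<in>A. d a b < e)"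
            using hdist_lessD[OF fA(1,2) fE(1,2) DE] by blast
          have inG: "b \<in> G a" if "a \<in> A" "b \<in> E" "d a b < e" for a b
          proof -
            have "b \<in> sball X d a (ea a)" using that fE ele[of a] unfolding sball_def by auto
            then show ?thesis using ea that by blast
          qed
          have "E \<subseteq> \<Union>(set Us)"
          proof
            fix b assume b: "b \<in> E"
            then obtain a where a: "a \<in> A" "d a b < e" using H by blast
            then have "b \<in> G a" using inG b by blast
            moreover obtain U where "U \<in> set Us" "a \<in> U" using A1 a by blast
            ultimately show "b \<in> \<Union>(set Us)" unfolding G_def by blast
          qed
          moreover have "\<forall>U\<in>set Us. E \<inter> U \<noteq> {}"
          proof
            fix U assume U: "U \<in> set Us"
            then obtain a where a: "a \<in> A" "a \<in> U" using A2 by blast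
            then obtain b where b: "b \<in> E" "d a b < e" using H by blast
            then have "b \<in> G a" using inG a by blast
            then have "b \<in> U" using U a unfolding G_def by blast
            then show "E \<inter> U \<noteq> {}" using b by blast
          qed
          ultimately show "E \<in> s" using EF unfolding s vietoris_basic_def by blast
        qed
        then show "\<exists>e>0. sball (vietoris_fin X) ?D A e \<subseteq> s" using epos by blast
      qed
    qed
  qed
  show ?thesis
    unfolding semi_metrizable_def
  proof (intro exI[of _ ?D] conjI ballI allI impI)
    show "is_symmetric_on (topspace (vietoris_fin X)) ?D"
      unfolding vt_topspace by (rule hdist_symmetric[OF sym])
  next
    fix A e assume "A \<in> topspace (vietoris_fin X)" "(0::real) < e"
    then show "\<exists>V. openin (vietoris_fin X) V \<and> A \<in> V \<and> V \<subseteq> sball (vietoris_fin X) ?D A e"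
      using C1 unfolding vt_topspace by blast
  next
    fix A U assume "A \<in> topspace (vietoris_fin X)" "openin (vietoris_fin X) U \<and> A \<in> U"
    then show "\<exists>e>0. sball (vietoris_fin X) ?D A e \<subseteq> U" using C2 by blast
  qed
qed


lemma Wseq:
  fixes X :: "'a topology"
  assumes reg: "regular_space X" and cp: "countable_pseudocharacter X" and x: "x \<in> topspace X"
  shows "\<exists>W::nat \<Rightarrow> 'a set. (\<forall>n. openin X (W n) \<and> x \<in> W n) \<and> (\<forall>m n. m \<le> n \<longrightarrow> W n \<subseteq> W m)
           \<and> (\<forall>p\<in>topspace X. p \<noteq> x \<longrightarrow> (\<exists>n. p \<notin> X closure_of (W n)))"
proof -
  have "\<exists>UU. countable UU \<and> UU \<noteq> {} \<and> (\<forall>U\<in>UU. openin X U) \<and> \<Inter>UU = {x}"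
    using bspec[OF cp[unfolded countable_pseudocharacter_def] x] .
  then obtain UU where UU0: "countable UU \<and> UU \<noteq> {} \<and> (\<forall>U\<in>UU. openin X U) \<and> \<Inter>UU = {x}"
    by (rule exE)
  have UU: "countable UU" "UU \<noteq> {}" "\<forall>U\<in>UU. openin X U" "\<Inter>UU = {x}"
    using UU0 by simp_all
  define U where "U n = from_nat_into UU n" for n
  have Uin: "U n \<in> UU" for n unfolding U_def using from_nat_into[OF UU(2)] by blast
  have xU: "x \<in> U n" for n
  proof -
    have "x \<in> \<Inter>UU" by (simp add: UU(4))
    then show ?thesis using Uin[of n] by (rule InterD)
  qed
  have "\<forall>n. \<exists>V. openin X V \<and> x \<in> V \<and> X closure_of V \<subseteq> U n"
  proof
    fix n
    have opn: "openin X (U n)" using UU(3) Uin by blast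
    have cl: "closedin X (topspace X - U n)" using opn by (simp add: closedin_diff)
    have "x \<in> topspace X - (topspace X - U n)" using x xU by blast
    have R: "\<forall>C a. closedin X C \<and> a \<in> topspace X - C
              \<longrightarrow> (\<exists>U. openin X U \<and> a \<in> U \<and> disjnt C (X closure_of U))"
      using reg unfolding regular_space by blast
    then obtain V where V: "openin X V" "x \<in> V" "disjnt (topspace X - U n) (X closure_of V)"
      using cl \<open>x \<in> topspace X - (topspace X - U n)\<close> by blast
    have "X closure_of V \<subseteq> U n"
      using V(3) closure_of_subset_topspace[of X V] unfolding disjnt_def by blast
    then show "\<exists>V. openin X V \<and> x \<in> V \<and> X closure_of V \<subseteq> U n" using V by blast
  qed
  from choice[OF this] obtain V where V: "\<forall>n. openin X (V n) \<and> x \<in> V n \<and> X closure_of (V n) \<subseteq> U n" by blast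
  define W where "W n = \<Inter>(V ` {..n})" for n
  have opW: "openin X (W n) \<and> x \<in> W n" for n
  proof
    show "openin X (W n)" unfolding W_def using V by (intro openin_Inter) auto
    show "x \<in> W n" unfolding W_def using V by blast
  qed
  have mono: "W n \<subseteq> W m" if "m \<le> n" for m n
  proof -
    have "V ` {..m} \<subseteq> V ` {..n}" using that by auto
    then show ?thesis unfolding W_def by (rule Inter_anti_mono)
  qed
  have sep: "\<exists>n. p \<notin> X closure_of (W n)" if p: "p \<in> topspace X" "p \<noteq> x" for p
  proof -
    have "p \<notin> \<Inter>UU" using p(2) by (simp add: UU(4))
    then obtain U0 where U0: "U0 \<in> UU" "p \<notin> U0" by blast
    have "U0 \<in> range (from_nat_into UU)" using range_from_nat_into[OF UU(2,1)] U0(1) by blast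
    then obtain n where n: "U0 = U n" unfolding U_def by blast
    have "W n \<subseteq> V n" unfolding W_def by blast
    then have "X closure_of (W n) \<subseteq> U n" using V closure_of_mono by blast
    then show ?thesis using U0 n by blast
  qed
  have P1: "\<forall>n. openin X (W n) \<and> x \<in> W n" using opW by blast
  have P2: "\<forall>m n. m \<le> n \<longrightarrow> W n \<subseteq> W m" using mono by blast
  have P3: "\<forall>p\<in>topspace X. p \<noteq> x \<longrightarrow> (\<exists>n. p \<notin> X closure_of (W n))" using sep by blast
  show ?thesis using P1 P2 P3 by (intro exI[where x=W]) (intro conjI)
qed

lemma pigeon:
  fixes f :: "nat \<Rightarrow> 'b"
  assumes K: "finite K" and ev: "\<forall>k\<ge>K0. f k \<in> K"
  shows "\<exists>v\<in>K. \<forall>N. \<exists>k\<ge>N. f k = v"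
proof (rule ccontr)
  assume nt: "\<not> ?thesis"
  have "\<forall>v\<in>K. \<exists>N. \<forall>k\<ge>N. f k \<noteq> v"
  proof
    fix v assume v: "v \<in> K"
    then have "\<not> (\<forall>N. \<exists>k\<ge>N. f k = v)" using nt by blast
    then show "\<exists>N. \<forall>k\<ge>N. f k \<noteq> v" by blast
  qed
  from bchoice[OF this] obtain Nf where Nf: "\<forall>v\<in>K. \<forall>k\<ge>Nf v. f k \<noteq> v" by blast
  define M where "M = max K0 (sum Nf K)"
  have fM: "f M \<in> K" using ev unfolding M_def by simp
  have "Nf (f M) \<le> sum Nf K" using member_le_sum[OF fM _ K, of Nf] by simp
  then have "Nf (f M) \<le> M" unfolding M_def by simp
  then have "f M \<noteq> f M" using Nf fM by blast
  then show False by simp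
qed

context
  fixes X :: "'a topology" and D :: "'a set \<Rightarrow> 'a set \<Rightarrow> real"
  assumes haus: "Hausdorff_space X"
    and Dsym: "is_symmetric_on (fin_subsets X) D"
    and Dop: "\<And>U. openin (vietoris_fin X) U \<longleftrightarrow>
               U \<subseteq> fin_subsets X \<and> (\<forall>A\<in>U. \<exists>e>0. sball (vietoris_fin X) D A e \<subseteq> U)"
begin

lemma single_FS: "p \<in> topspace X \<Longrightarrow> {p} \<in> fin_subsets X"
  by (simp add: fin_subsets_def)

lemma D_facts:
  assumes "A \<in> fin_subsets X" "B \<in> fin_subsets X"
  shows "D A B \<ge> 0" "D A B = 0 \<longleftrightarrow> A = B" "D A B = D B A"
  using Dsym assms unfolding is_symmetric_on_def by auto

lemma VO1:
  assumes "openin (vietoris_fin X) Q" "B \<in> Q"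
  shows "\<exists>e>0. \<forall>E\<in>fin_subsets X. D B E < e \<longrightarrow> E \<in> Q"
proof -
  obtain e where "e > 0" "sball (vietoris_fin X) D B e \<subseteq> Q"
    using Dop[of Q] assms by blast
  then show ?thesis unfolding sball_def vt_topspace by blast
qed

lemma S1:
  assumes "openin X U" "p \<in> U"
  shows "\<exists>e>0. \<forall>q\<in>topspace X. D {p} {q} < e \<longrightarrow> q \<in> U"
proof -
  have p: "p \<in> topspace X" using assms openin_subset by blast
  have op: "openin (vietoris_fin X) (vietoris_basic X [U])"
    by (rule vt_basic_open) (use assms in simp)
  have "{p} \<in> vietoris_basic X [U]"
    using assms p by (simp add: vietoris_basic_def fin_subsets_def)
  then obtain e where e: "e > 0" "\<forall>E\<in>fin_subsets X. D {p} E < e \<longrightarrow> E \<in> vietoris_basic X [U]"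
    using VO1[OF op] by blast
  show ?thesis
  proof (intro exI[of _ e] conjI ballI impI)
    fix q assume "q \<in> topspace X" "D {p} {q} < e"
    then have "{q} \<in> vietoris_basic X [U]" using e single_FS by blast
    then show "q \<in> U" by (simp add: vietoris_basic_def)
  qed (use e in simp)
qed

lemma N2: "openin (vietoris_fin X) {E \<in> fin_subsets X. \<exists>a\<in>E. \<exists>b\<in>E. a \<noteq> b}"
proof (subst openin_subopen, intro ballI)
  fix E assume E: "E \<in> {E \<in> fin_subsets X. \<exists>a\<in>E. \<exists>b\<in>E. a \<noteq> b}"
  then obtain a b where ab: "a \<in> E" "b \<in> E" "a \<noteq> b" and EF: "E \<in> fin_subsets X" by blast
  have "a \<in> topspace X" "b \<in> topspace X" using ab EF by (auto simp: fin_subsets_def)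
  then obtain Ua Ub where U: "openin X Ua" "openin X Ub" "a \<in> Ua" "b \<in> Ub" "disjnt Ua Ub"
    using haus ab unfolding Hausdorff_space_def by blast
  let ?T = "vietoris_basic X [Ua, Ub, topspace X]"
  have "openin (vietoris_fin X) ?T" by (rule vt_basic_open) (use U in auto)
  moreover have "E \<in> ?T"
  proof -
    have Et: "E \<subseteq> topspace X" using EF by (simp add: fin_subsets_def)
    have "E \<inter> Ua \<noteq> {}" "E \<inter> Ub \<noteq> {}" "E \<inter> topspace X \<noteq> {}" using ab U Et by blast+
    then show ?thesis using EF Et unfolding vietoris_basic_def by auto
  qed
  moreover have "?T \<subseteq> {E \<in> fin_subsets X. \<exists>a\<in>E. \<exists>b\<in>E. a \<noteq> b}"
  proof
    fix E' assume "E' \<in> ?T"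
    then have "E' \<in> fin_subsets X" "E' \<inter> Ua \<noteq> {}" "E' \<inter> Ub \<noteq> {}"
      unfolding vietoris_basic_def by auto
    then obtain a' b' where "a' \<in> E'" "a' \<in> Ua" "b' \<in> E'" "b' \<in> Ub" by blast
    moreover have "a' \<noteq> b'" using U(5) calculation unfolding disjnt_def by blast
    ultimately show "E' \<in> {E \<in> fin_subsets X. \<exists>a\<in>E. \<exists>b\<in>E. a \<noteq> b}"
      using \<open>E' \<in> fin_subsets X\<close> by blast
  qed
  ultimately show "\<exists>T. openin (vietoris_fin X) T \<and> E \<in> T \<and> T \<subseteq> {E \<in> fin_subsets X. \<exists>a\<in>E. \<exists>b\<in>E. a \<noteq> b}"
    by blast
qed

lemma not_two_single:
  assumes "E \<in> fin_subsets X" "\<not> (\<exists>a\<in>E. \<exists>b\<in>E. a \<noteq> b)"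
  shows "\<exists>q\<in>topspace X. E = {q}"
proof -
  obtain q where q: "q \<in> E" using assms(1) by (auto simp: fin_subsets_def)
  then have "E = {q}" using assms(2) by blast
  then show ?thesis using assms(1) by (auto simp: fin_subsets_def)
qed

lemma S2:
  assumes U: "U \<subseteq> topspace X" and H: "\<forall>p\<in>U. \<exists>e>0. \<forall>q\<in>topspace X. D {p} {q} < e \<longrightarrow> q \<in> U"
  shows "openin X U"
proof -
  define UU where "UU = {E \<in> fin_subsets X. (\<exists>p\<in>U. E = {p}) \<or> (\<exists>a\<in>E. \<exists>b\<in>E. a \<noteq> b)}"
  have opUU: "openin (vietoris_fin X) UU"
  proof (subst Dop, intro conjI ballI)
    show "UU \<subseteq> fin_subsets X" unfolding UU_def by blast
  next
    fix E assume E: "E \<in> UU"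
    show "\<exists>e>0. sball (vietoris_fin X) D E e \<subseteq> UU"
    proof (cases "\<exists>a\<in>E. \<exists>b\<in>E. a \<noteq> b")
      case True
      then have "E \<in> {E \<in> fin_subsets X. \<exists>a\<in>E. \<exists>b\<in>E. a \<noteq> b}" using E unfolding UU_def by blast
      then obtain e where e: "e > 0" "\<forall>E'\<in>fin_subsets X. D E E' < e \<longrightarrow> E' \<in> {E \<in> fin_subsets X. \<exists>a\<in>E. \<exists>b\<in>E. a \<noteq> b}"
        using VO1[OF N2] by blast
      have "sball (vietoris_fin X) D E e \<subseteq> UU"
      proof
        fix E' assume "E' \<in> sball (vietoris_fin X) D E e"
        then have "E' \<in> fin_subsets X" "D E E' < e" unfolding sball_def vt_topspace by auto
        then have "E' \<in> {E \<in> fin_subsets X. \<exists>a\<in>E. \<exists>b\<in>E. a \<noteq> b}" using e(2) by blast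
        then show "E' \<in> UU" unfolding UU_def by blast
      qed
      then show ?thesis using e(1) by blast
    next
      case False
      have "(\<exists>p\<in>U. E = {p}) \<or> (\<exists>a\<in>E. \<exists>b\<in>E. a \<noteq> b)" using E unfolding UU_def by simp
      then obtain p where p: "p \<in> U" "E = {p}" using False by blast
      have "\<exists>e>0. \<forall>q\<in>topspace X. D {p} {q} < e \<longrightarrow> q \<in> U" using H p(1) by blast
      then obtain e where e: "e > 0" "\<And>q. q \<in> topspace X \<Longrightarrow> D {p} {q} < e \<Longrightarrow> q \<in> U" by blast
      have "sball (vietoris_fin X) D E e \<subseteq> UU"
      proof
        fix E' assume E': "E' \<in> sball (vietoris_fin X) D E e"
        then have E'F: "E' \<in> fin_subsets X" and DE: "D {p} E' < e"
          using p(2) unfolding sball_def vt_topspace by auto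
        show "E' \<in> UU"
        proof (cases "\<exists>a\<in>E'. \<exists>b\<in>E'. a \<noteq> b")
          case True then show ?thesis using E'F unfolding UU_def by blast
        next
          case False
          obtain q where q: "q \<in> topspace X" "E' = {q}" using not_two_single[OF E'F False] by blast
          have "D {p} {q} < e" using DE q(2) by simp
          then have "q \<in> U" using e(2) q(1) by blast
          then have "\<exists>p\<in>U. E' = {p}" using q(2) by blast
          then show ?thesis using E'F unfolding UU_def by blast
        qed
      qed
      then show ?thesis using e(1) by blast
    qed
  qed
  show ?thesis
  proof (subst openin_subopen, intro ballI)
    fix p assume p: "p \<in> U"
    then have pt: "p \<in> topspace X" using U by blast
    have "{p} \<in> UU" using p pt single_FS unfolding UU_def by blast
    then obtain V where V: "openin X V" "p \<in> V" "\<forall>E\<in>fin_subsets X. E \<subseteq> V \<longrightarrow> E \<in> UU"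
      using vt_nbhd_singleton[OF opUU pt] by blast
    have "V \<subseteq> U"
    proof
      fix q assume q: "q \<in> V"
      then have qt: "q \<in> topspace X" using V openin_subset by blast
      then have "{q} \<in> UU" using V q single_FS by blast
      then have "(\<exists>p\<in>U. {q} = {p}) \<or> (\<exists>a\<in>{q}. \<exists>b\<in>{q}. a \<noteq> b)" unfolding UU_def by blast
      then show "q \<in> U" by auto
    qed
    then show "\<exists>T. openin X T \<and> p \<in> T \<and> T \<subseteq> U" using V by blast
  qed
qed

lemma LIM:
  assumes "\<forall>n. \<sigma> n \<in> topspace X" "\<forall>n. D {p} {\<sigma> n} < 1 / real (Suc n)" "p \<in> topspace X"
  shows "limitin X \<sigma> p sequentially"
  unfolding limitin_def
proof (intro conjI allI impI)
  show "p \<in> topspace X" by (rule assms(3))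
  fix U assume U: "openin X U \<and> p \<in> U"
  then obtain e where e: "e > 0" "\<forall>q\<in>topspace X. D {p} {q} < e \<longrightarrow> q \<in> U" using S1 by blast
  obtain N where N: "inverse (real (Suc N)) < e" using reals_Archimedean[OF e(1)] by blast
  show "\<forall>\<^sub>F n in sequentially. \<sigma> n \<in> U"
    unfolding eventually_sequentially
  proof (intro exI[of _ N] allI impI)
    fix n assume "N \<le> n"
    then have "1 / real (Suc n) \<le> inverse (real (Suc N))"
      by (simp add: divide_simps)
    then have "D {p} {\<sigma> n} < e" using assms(2) N by (smt (verit))
    then show "\<sigma> n \<in> U" using e assms(1) by blast
  qed
qed

lemma SC:
  assumes S: "S \<subseteq> topspace X"
    and H: "\<And>\<sigma> p. (\<forall>n. \<sigma> n \<in> S) \<Longrightarrow> limitin X \<sigma> p sequentially \<Longrightarrow> p \<in> S"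
  shows "closedin X S"
  unfolding closedin_def
proof (intro conjI S2)
  show "S \<subseteq> topspace X" by (rule S)
  show "topspace X - S \<subseteq> topspace X" by blast
  show "\<forall>p\<in>topspace X - S. \<exists>e>0. \<forall>q\<in>topspace X. D {p} {q} < e \<longrightarrow> q \<in> topspace X - S"
  proof (rule ballI, rule ccontr)
    fix p assume p: "p \<in> topspace X - S"
      and n: "\<not> (\<exists>e>0. \<forall>q\<in>topspace X. D {p} {q} < e \<longrightarrow> q \<in> topspace X - S)"
    have "\<forall>n. \<exists>q. q \<in> S \<and> D {p} {q} < 1 / real (Suc n)"
    proof
      fix n
      have "(1::real) / real (Suc n) > 0" by simp
      then show "\<exists>q. q \<in> S \<and> D {p} {q} < 1 / real (Suc n)" using n by blast
    qed
    then obtain \<sigma> where \<sigma>: "\<forall>n. \<sigma> n \<in> S \<and> D {p} {\<sigma> n} < 1 / real (Suc n)" by metis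
    have "limitin X \<sigma> p sequentially"
      by (rule LIM) (use \<sigma> S p in auto)
    then have "p \<in> S" using H \<sigma> by blast
    then show False using p by blast
  qed
qed


lemma no_seq_C:
  fixes q :: "nat \<Rightarrow> 'a" and P :: "nat \<Rightarrow> bool"
  assumes x: "x \<in> topspace X" and e: "e > 0"
    and Cdef: "C = {c \<in> topspace X. e \<le> D {x} {c}}"
    and qC: "\<And>k. P k \<Longrightarrow> q k \<in> C" and freq: "\<And>N. \<exists>k\<ge>N. P k"
    and conv: "\<And>Q. openin X Q \<Longrightarrow> x \<in> Q \<Longrightarrow> \<exists>N. \<forall>k\<ge>N. P k \<longrightarrow> q k \<in> Q"
  shows False
proof -
  define S where "S = q ` {k. P k}"
  have SC: "S \<subseteq> C" unfolding S_def using qC by blast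
  have Ct: "C \<subseteq> topspace X" unfolding Cdef by blast
  have Dxx: "D {x} {x} = 0" using D_facts(2)[OF single_FS[OF x] single_FS[OF x]] by simp
  have xnC: "x \<notin> C" unfolding Cdef using Dxx e by auto
  have opU: "openin X (topspace X - S)"
  proof (rule S2)
    show "topspace X - S \<subseteq> topspace X" by blast
    show "\<forall>p\<in>topspace X - S. \<exists>e>0. \<forall>q\<in>topspace X. D {p} {q} < e \<longrightarrow> q \<in> topspace X - S"
    proof
      fix p assume p: "p \<in> topspace X - S"
      show "\<exists>e>0. \<forall>q\<in>topspace X. D {p} {q} < e \<longrightarrow> q \<in> topspace X - S"
      proof (cases "p = x")
        case True
        show ?thesis
        proof (intro exI[of _ e] conjI ballI impI)
          show "e > 0" by (rule e)
          fix q' assume q': "q' \<in> topspace X" "D {p} {q'} < e"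
          then have "q' \<notin> C" unfolding Cdef using True by auto
          then show "q' \<in> topspace X - S" using q'(1) SC by blast
        qed
      next
        case False
        have pt: "p \<in> topspace X" using p by blast
        obtain Op Ox where O: "openin X Op" "openin X Ox" "p \<in> Op" "x \<in> Ox" "disjnt Op Ox"
          using haus pt x False unfolding Hausdorff_space_def by blast
        obtain N where N: "\<forall>k\<ge>N. P k \<longrightarrow> q k \<in> Ox" using conv[OF O(2,4)] by blast
        define Fin where "Fin = q ` {k. k < N \<and> P k}"
        have finF: "finite Fin" unfolding Fin_def
          by (rule finite_imageI, rule finite_subset[of _ "{..<N}"]) auto
        have FinS: "Fin \<subseteq> S" unfolding Fin_def S_def by blast
        have Fint: "Fin \<subseteq> topspace X" using FinS SC Ct by blast
        have clF: "closedin X Fin"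
          using Hausdorff_imp_t1_space[OF haus] finF Fint t1_space_closedin_finite by blast
        have opO': "openin X (Op - Fin)" using O(1) clF by (rule openin_diff)
        have pO': "p \<in> Op - Fin" using O(3) p FinS by blast
        have O'S: "Op - Fin \<subseteq> topspace X - S"
        proof
          fix z assume z: "z \<in> Op - Fin"
          have zt: "z \<in> topspace X" using z opO' openin_subset by blast
          have "z \<notin> S"
          proof
            assume "z \<in> S"
            then obtain k where k: "P k" "z = q k" unfolding S_def by blast
            show False
            proof (cases "k < N")
              case True
              then have "z \<in> Fin" using k unfolding Fin_def by blast
              then show False using z by blast
            next
              case False
              then have "z \<in> Ox" using N k by auto
              then show False using z O(5) unfolding disjnt_def by blast
            qed
          qed
          then show "z \<in> topspace X - S" using zt by blast
        qed
        obtain e' where e': "e' > 0" "\<forall>q\<in>topspace X. D {p} {q} < e' \<longrightarrow> q \<in> Op - Fin"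
          using S1[OF opO' pO'] by blast
        show ?thesis using e' O'S by blast
      qed
    qed
  qed
  have "x \<in> topspace X - S" using x xnC SC by blast
  then obtain N where N: "\<forall>k\<ge>N. P k \<longrightarrow> q k \<in> topspace X - S" using conv[OF opU] by blast
  obtain k where k: "k \<ge> N" "P k" using freq by blast
  have "q k \<in> S" unfolding S_def using k(2) by blast
  then show False using N k by blast
qed

lemma tightness:
  assumes S: "S \<subseteq> topspace X" and xS: "x \<in> X closure_of S"
  shows "\<exists>S0. S0 \<subseteq> S \<and> countable S0 \<and> x \<in> X closure_of S0"
proof -
  define T where "T = \<Union>{X closure_of S0 | S0. S0 \<subseteq> S \<and> countable S0}"
  have clT: "closedin X T"
  proof (rule SC)
    show "T \<subseteq> topspace X"
    proof
      fix z assume "z \<in> T"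
      then obtain S0 where "z \<in> X closure_of S0" unfolding T_def by blast
      then show "z \<in> topspace X" using closure_of_subset_topspace[of X S0] by blast
    qed
  next
    fix \<sigma> p assume \<sigma>: "\<forall>n. \<sigma> n \<in> T" and lim: "limitin X \<sigma> p sequentially"
    have "\<forall>n. \<exists>S0. S0 \<subseteq> S \<and> countable S0 \<and> \<sigma> n \<in> X closure_of S0"
      using \<sigma> unfolding T_def by blast
    from choice[OF this] obtain S0 where S0: "\<forall>n. S0 n \<subseteq> S \<and> countable (S0 n) \<and> \<sigma> n \<in> X closure_of (S0 n)"
      by blast
    define Su where "Su = \<Union>(range S0)"
    have cSu: "countable Su" unfolding Su_def using S0 by (intro countable_UN) auto
    have SuS: "Su \<subseteq> S" unfolding Su_def using S0 by blast
    have "\<forall>n. \<sigma> n \<in> X closure_of Su"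
    proof
      fix n
      have "S0 n \<subseteq> Su" unfolding Su_def by blast
      then show "\<sigma> n \<in> X closure_of Su" using S0 closure_of_mono by blast
    qed
    then have "p \<in> X closure_of Su"
      using limitin_closedin[OF lim closedin_closure_of] by simp
    then show "p \<in> T" unfolding T_def using cSu SuS by blast
  qed
  have "S \<subseteq> T"
  proof
    fix s assume s: "s \<in> S"
    have "s \<in> X closure_of {s}" using s S closure_of_subset[of "{s}" X] by blast
    moreover have "countable {s}" by simp
    ultimately show "s \<in> T" unfolding T_def using s by blast
  qed
  then have "X closure_of S \<subseteq> T" using clT closure_of_minimal by blast
  then have "x \<in> T" using xS by blast
  then show ?thesis unfolding T_def by blast
qed

lemma seq_to:
  assumes x: "x \<in> topspace X" and xc: "x \<in> X closure_of (topspace X - {x})"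
  shows "\<exists>y. (\<forall>n. y n \<in> topspace X \<and> y n \<noteq> x) \<and> limitin X y x sequentially"
proof (rule ccontr)
  assume n: "\<not> ?thesis"
  have "closedin X (topspace X - {x})"
  proof (rule SC)
    show "topspace X - {x} \<subseteq> topspace X" by blast
  next
    fix \<sigma> p assume \<sigma>: "\<forall>n. \<sigma> n \<in> topspace X - {x}" and lim: "limitin X \<sigma> p sequentially"
    have pt: "p \<in> topspace X" using lim limitin_topspace by metis
    show "p \<in> topspace X - {x}"
    proof (rule ccontr)
      assume "p \<notin> topspace X - {x}"
      then have "p = x" using pt by blast
      then show False using n \<sigma> lim by blast
    qed
  qed
  then have "X closure_of (topspace X - {x}) = topspace X - {x}" by (simp add: closure_of_eq)
  then show False using xc by blast
qed

lemma main_nbhd: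
  assumes reg: "regular_space X" and cp: "countable_pseudocharacter X"
    and x: "x \<in> topspace X" and e: "e > 0"
  shows "\<exists>V. openin X V \<and> x \<in> V \<and> V \<subseteq> {q \<in> topspace X. D {x} {q} < e}"
proof (rule ccontr)
  assume nV: "\<not> ?thesis"
  define C where "C = {c \<in> topspace X. e \<le> D {x} {c}}"
  have Ct: "C \<subseteq> topspace X" unfolding C_def by blast
  have Dxx: "D {x} {x} = 0" using D_facts(2)[OF single_FS[OF x] single_FS[OF x]] by simp
  have xnC: "x \<notin> C" unfolding C_def using Dxx e by auto
  have xC: "x \<in> X closure_of C"
  proof (rule ccontr)
    assume xc: "x \<notin> X closure_of C"
    define V where "V = topspace X - X closure_of C"
    have "openin X V" unfolding V_def by (simp add: openin_diff)
    moreover have "x \<in> V" unfolding V_def using x xc by blast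
    moreover have "V \<subseteq> {q \<in> topspace X. D {x} {q} < e}"
    proof
      fix q assume q: "q \<in> V"
      then have qt: "q \<in> topspace X" unfolding V_def by blast
      have "q \<notin> C" using q closure_of_subset[OF Ct] unfolding V_def by blast
      then have "D {x} {q} < e" using qt unfolding C_def by auto
      then show "q \<in> {q \<in> topspace X. D {x} {q} < e}" using qt by blast
    qed
    ultimately show False using nV by blast
  qed
  obtain C0 where C0: "C0 \<subseteq> C" "countable C0" "x \<in> X closure_of C0"
    using tightness[OF Ct xC] by blast
  have "C \<subseteq> topspace X - {x}" using Ct xnC by blast
  then have "x \<in> X closure_of (topspace X - {x})" using xC closure_of_mono by blast
  then obtain y where y: "\<forall>n. y n \<in> topspace X \<and> y n \<noteq> x" and ylim: "limitin X y x sequentially"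
    using seq_to[OF x] by blast
  obtain W :: "nat \<Rightarrow> 'a set" where W1: "\<forall>n. openin X (W n) \<and> x \<in> W n"
    and W2: "\<forall>m n. m \<le> n \<longrightarrow> W n \<subseteq> W m"
    and W3: "\<forall>p\<in>topspace X. p \<noteq> x \<longrightarrow> (\<exists>n. p \<notin> X closure_of (W n))"
    using Wseq[OF reg cp x] by blast
  have C0W: "C0 \<inter> W n \<noteq> {}" for n
  proof -
    have "openin X (W n)" "x \<in> W n" using W1 by auto
    then obtain c where "c \<in> C0" "c \<in> W n" using C0(3) unfolding in_closure_of by blast
    then show ?thesis by blast
  qed
  have cC0W: "countable (C0 \<inter> W n)" for n using C0(2) by simp
  define ee where "ee n r = from_nat_into (C0 \<inter> W n) r" for n r
  have ee_in: "ee n r \<in> C0 \<inter> W n" for n r unfolding ee_def using from_nat_into[OF C0W] by blast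
  have ee_surj: "\<exists>r. ee n r = c" if "c \<in> C0 \<inter> W n" for n c
    unfolding ee_def using from_nat_into_surj[OF cC0W that] by blast
  have eeC: "ee n r \<in> C" for n r using ee_in C0(1) by blast
  define A where "A n r = insert (ee n r) (insert x (y ` {n..n+r}))" for n r
  have AF: "A n r \<in> fin_subsets X" for n r
  proof -
    have "ee n r \<in> topspace X" using eeC Ct by blast
    moreover have "y ` {n..n+r} \<subseteq> topspace X" using y by blast
    ultimately show ?thesis unfolding A_def fin_subsets_def using x by auto
  qed
  have yA: "y j \<in> A n r" if "n \<le> j" "j \<le> n + r" for n r j
    unfolding A_def using that by auto
  define Acal where "Acal = {A n r | n r. True}"
  define Opn where "Opn = fin_subsets X - Acal"
  have ball: "\<exists>\<epsilon>>0. sball (vietoris_fin X) D B \<epsilon> \<subseteq> Opn" if BO: "B \<in> Opn" for B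
  proof (rule ccontr)
    assume nb: "\<not> (\<exists>\<epsilon>>0. sball (vietoris_fin X) D B \<epsilon> \<subseteq> Opn)"
    have BF: "B \<in> fin_subsets X" and BnA: "B \<notin> Acal" using BO unfolding Opn_def by auto
    have fB: "finite B" "B \<noteq> {}" "B \<subseteq> topspace X" using BF unfolding fin_subsets_def by auto
    have "\<forall>k. \<exists>nr. D B (A (fst nr) (snd nr)) < 1 / real (Suc k)"
    proof
      fix k
      have pos: "(1::real) / real (Suc k) > 0" by simp
      then have "\<not> sball (vietoris_fin X) D B (1 / real (Suc k)) \<subseteq> Opn" using nb by blast
      then obtain E where E: "E \<in> sball (vietoris_fin X) D B (1 / real (Suc k))" "E \<notin> Opn" by blast
      have EF: "E \<in> fin_subsets X" and DE: "D B E < 1 / real (Suc k)"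
        using E(1) unfolding sball_def vt_topspace by auto
      have "E \<in> Acal" using E(2) EF unfolding Opn_def by blast
      then obtain n r where "E = A n r" unfolding Acal_def by blast
      then have "D B (A (fst (n, r)) (snd (n, r))) < 1 / real (Suc k)" using DE by simp
      then show "\<exists>nr. D B (A (fst nr) (snd nr)) < 1 / real (Suc k)" by blast
    qed
    from choice[OF this] obtain g where g: "\<forall>k. D B (A (fst (g k)) (snd (g k))) < 1 / real (Suc k)"
      by blast
    define nk where "nk k = fst (g k)" for k
    define rk where "rk k = snd (g k)" for k
    have Dk: "D B (A (nk k) (rk k)) < 1 / real (Suc k)" for k unfolding nk_def rk_def using g by blast
    have F1: "\<exists>K. \<forall>k\<ge>K. A (nk k) (rk k) \<subseteq> V" if V: "openin X V" "B \<subseteq> V" for V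
    proof -
      have op: "openin (vietoris_fin X) (vietoris_basic X [V])" by (rule vt_basic_open) (use V in simp)
      have "B \<inter> V \<noteq> {}" using V(2) fB(2) by blast
      then have "B \<in> vietoris_basic X [V]" using BF V(2) unfolding vietoris_basic_def by simp
      then obtain \<epsilon> where eps: "\<epsilon> > 0" "\<forall>E\<in>fin_subsets X. D B E < \<epsilon> \<longrightarrow> E \<in> vietoris_basic X [V]"
        using VO1[OF op] by blast
      obtain K where K: "inverse (real (Suc K)) < \<epsilon>" using reals_Archimedean[OF eps(1)] by blast
      have "A (nk k) (rk k) \<subseteq> V" if k: "k \<ge> K" for k
      proof -
        have "1 / real (Suc k) \<le> inverse (real (Suc K))" using k by (simp add: divide_simps)
        then have "D B (A (nk k) (rk k)) < \<epsilon>" using Dk[of k] K by linarith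
        then have "A (nk k) (rk k) \<in> vietoris_basic X [V]" using eps(2) AF by blast
        then show ?thesis unfolding vietoris_basic_def by simp
      qed
      then show ?thesis by blast
    qed
    define B' where "B' = B - {x}"
    have fB': "finite B'" unfolding B'_def using fB by simp
    have B't: "B' \<subseteq> topspace X" unfolding B'_def using fB by blast
    have "\<forall>b\<in>B'. \<exists>m. b \<notin> X closure_of (W m)" using W3 B't unfolding B'_def by blast
    from bchoice[OF this] obtain m where m: "\<forall>b\<in>B'. b \<notin> X closure_of (W (m b))" by blast
    define M where "M = sum m B'"
    have BM: "b \<notin> X closure_of (W M)" if b: "b \<in> B'" for b
    proof -
      have "m b \<le> M" unfolding M_def using member_le_sum[OF b _ fB', of m] by simp
      then have "W M \<subseteq> W (m b)" using W2 by blast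
      then have "X closure_of (W M) \<subseteq> X closure_of (W (m b))" by (rule closure_of_mono)
      then show ?thesis using m b by blast
    qed
    have stepA: "\<exists>K0. \<forall>k\<ge>K0. nk k < M"
    proof (rule ccontr)
      assume nA: "\<not> (\<exists>K0. \<forall>k\<ge>K0. nk k < M)"
      show False
      proof (rule no_seq_C[OF x e C_def, of "\<lambda>k. M \<le> nk k" "\<lambda>k. ee (nk k) (rk k)"])
        show "ee (nk k) (rk k) \<in> C" if "M \<le> nk k" for k by (rule eeC)
        show "\<exists>k\<ge>N. M \<le> nk k" for N using nA by (meson not_le)
        fix Q assume Q: "openin X Q" "x \<in> Q"
        define V where "V = Q \<union> (topspace X - X closure_of (W M))"
        have opV: "openin X V" unfolding V_def using Q(1) by (simp add: openin_Un openin_diff)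
        have BV: "B \<subseteq> V"
        proof
          fix b assume b: "b \<in> B"
          show "b \<in> V"
          proof (cases "b = x")
            case True then show ?thesis using Q(2) unfolding V_def by blast
          next
            case False
            then have "b \<in> B'" using b unfolding B'_def by blast
            then show ?thesis using BM B't unfolding V_def by blast
          qed
        qed
        obtain K where K: "\<forall>k\<ge>K. A (nk k) (rk k) \<subseteq> V" using F1[OF opV BV] by blast
        show "\<exists>N. \<forall>k\<ge>N. M \<le> nk k \<longrightarrow> ee (nk k) (rk k) \<in> Q"
        proof (intro exI[of _ K] allI impI)
          fix k assume k: "K \<le> k" "M \<le> nk k"
          have inV: "ee (nk k) (rk k) \<in> V" using K k(1) unfolding A_def by blast
          have "ee (nk k) (rk k) \<in> W (nk k)" using ee_in by blast
          moreover have "W (nk k) \<subseteq> W M" using W2 k(2) by blast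
          moreover have "W M \<subseteq> X closure_of (W M)"
            using closure_of_subset[OF openin_subset] W1 by blast
          ultimately have "ee (nk k) (rk k) \<in> X closure_of (W M)" by blast
          then show "ee (nk k) (rk k) \<in> Q" using inV unfolding V_def by blast
        qed
      qed
    qed
    then obtain K0 where K0: "\<forall>k\<ge>K0. nk k < M" by blast
    have "\<exists>J\<ge>M. y J \<notin> B"
    proof (rule ccontr)
      assume nJ: "\<not> (\<exists>J\<ge>M. y J \<notin> B)"
      have clB': "closedin X B'"
        using Hausdorff_imp_t1_space[OF haus] fB' B't t1_space_closedin_finite by blast
      have "openin X (topspace X - B')" using clB' by (simp add: openin_diff)
      moreover have "x \<in> topspace X - B'" using x unfolding B'_def by blast
      ultimately have "eventually (\<lambda>n. y n \<in> topspace X - B') sequentially"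
        using ylim unfolding limitin_def by blast
      then obtain N where N: "\<forall>n\<ge>N. y n \<in> topspace X - B'" unfolding eventually_sequentially by blast
      have "y (max N M) \<in> B" using nJ by simp
      then have "y (max N M) \<in> B'" using y unfolding B'_def by blast
      then show False using N by simp
    qed
    then obtain J where J: "J \<ge> M" "y J \<notin> B" by blast
    have opJ: "openin X (topspace X - {y J})"
      using closedin_t1_singleton[OF Hausdorff_imp_t1_space[OF haus]] y by (simp add: openin_diff)
    have BJ: "B \<subseteq> topspace X - {y J}" using fB(3) J(2) by blast
    obtain K1 where K1: "\<forall>k\<ge>K1. A (nk k) (rk k) \<subseteq> topspace X - {y J}" using F1[OF opJ BJ] by blast
    have inK: "(nk k, rk k) \<in> {..<J} \<times> {..<J}" if k: "k \<ge> max K0 K1" for k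
    proof -
      have n1: "nk k < M" using K0 k by simp
      have "y J \<notin> A (nk k) (rk k)" using K1 k by auto
      then have "\<not> (nk k \<le> J \<and> J \<le> nk k + rk k)" using yA by blast
      then have "nk k + rk k < J" using n1 J(1) by linarith
      then show ?thesis by simp
    qed
    obtain v where v: "v \<in> {..<J} \<times> {..<J}" "\<forall>N. \<exists>k\<ge>N. (nk k, rk k) = v"
      using pigeon[of "{..<J} \<times> {..<J}" "max K0 K1" "\<lambda>k. (nk k, rk k)"] inK by blast
    obtain n0 r0 where v0: "v = (n0, r0)" by (cases v) blast
    have "D B (A n0 r0) \<le> 0"
    proof (rule ccontr)
      assume "\<not> D B (A n0 r0) \<le> 0"
      then have pos: "D B (A n0 r0) > 0" by simp
      obtain N where N: "inverse (real (Suc N)) < D B (A n0 r0)" using reals_Archimedean[OF pos] by blast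
      obtain k where k: "k \<ge> N" "(nk k, rk k) = (n0, r0)" using v(2) v0 by blast
      have "1 / real (Suc k) \<le> inverse (real (Suc N))" using k(1) by (simp add: divide_simps)
      moreover have "D B (A n0 r0) < 1 / real (Suc k)" using Dk[of k] k(2) by simp
      ultimately show False using N by linarith
    qed
    moreover have "D B (A n0 r0) \<ge> 0" using D_facts(1)[OF BF AF] by blast
    ultimately have "D B (A n0 r0) = 0" by linarith
    then have "B = A n0 r0" using D_facts(2)[OF BF AF] by blast
    then have "B \<in> Acal" unfolding Acal_def by blast
    then show False using BnA by blast
  qed
  have opOpn: "openin (vietoris_fin X) Opn"
  proof (subst Dop, intro conjI ballI)
    show "Opn \<subseteq> fin_subsets X" unfolding Opn_def by blast
    fix B assume "B \<in> Opn"
    then show "\<exists>e>0. sball (vietoris_fin X) D B e \<subseteq> Opn" using ball by blast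
  qed
  have xOpn: "{x} \<in> Opn"
  proof -
    have "{x} \<notin> Acal"
    proof
      assume "{x} \<in> Acal"
      then obtain n r where nr: "{x} = A n r" unfolding Acal_def by blast
      have "y n \<in> A n r" using yA[of n n r] by simp
      then show False using nr y by auto
    qed
    then show ?thesis unfolding Opn_def using single_FS[OF x] by blast
  qed
  obtain V where V: "openin X V" "x \<in> V" "\<forall>E\<in>fin_subsets X. E \<subseteq> V \<longrightarrow> E \<in> Opn"
    using vt_nbhd_singleton[OF opOpn x xOpn] by blast
  have "eventually (\<lambda>n. y n \<in> V) sequentially" using ylim V(1,2) unfolding limitin_def by blast
  then obtain N where N: "\<forall>n\<ge>N. y n \<in> V" unfolding eventually_sequentially by blast
  have "openin X (V \<inter> W N)" using V(1) W1 by blast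
  moreover have "x \<in> V \<inter> W N" using V(2) W1 by blast
  ultimately obtain c where c: "c \<in> C0" "c \<in> V \<inter> W N" using C0(3) unfolding in_closure_of by blast
  then obtain r where r: "ee N r = c" using ee_surj[of c N] by blast
  have "A N r \<subseteq> V"
  proof -
    have "y ` {N..N+r} \<subseteq> V" using N by auto
    then show ?thesis unfolding A_def using r c V(2) by blast
  qed
  then have "A N r \<in> Opn" using V(3) AF by blast
  moreover have "A N r \<in> Acal" unfolding Acal_def by blast
  ultimately show False unfolding Opn_def by blast
qed

end

lemma sym_vt_imp_semi:
  assumes reg: "regular_space X" and haus: "Hausdorff_space X" and cp: "countable_pseudocharacter X"
    and sy: "symmetrizable (vietoris_fin X)"
  shows "semi_metrizable X"
proof -
  from sy[unfolded symmetrizable_def] obtain D where D0: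
    "is_symmetric_on (topspace (vietoris_fin X)) D \<and>
     (\<forall>U. openin (vietoris_fin X) U \<longleftrightarrow>
        U \<subseteq> topspace (vietoris_fin X) \<and> (\<forall>x\<in>U. \<exists>e>0. sball (vietoris_fin X) D x e \<subseteq> U))"
    by (rule exE)
  have Dsym: "is_symmetric_on (fin_subsets X) D" using conjunct1[OF D0] by (simp only: vt_topspace)
  have Dop: "openin (vietoris_fin X) U \<longleftrightarrow>
      U \<subseteq> fin_subsets X \<and> (\<forall>A\<in>U. \<exists>e>0. sball (vietoris_fin X) D A e \<subseteq> U)" for U
    using spec[OF conjunct2[OF D0], of U] by (simp only: vt_topspace)
  define d where "d p q = D {p} {q}" for p q
  have dsym: "is_symmetric_on (topspace X) d"
    unfolding is_symmetric_on_def
  proof (intro ballI conjI)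
    fix p q assume p: "p \<in> topspace X" and q: "q \<in> topspace X"
    have pF: "{p} \<in> fin_subsets X" and qF: "{q} \<in> fin_subsets X"
      using p q by (simp_all add: fin_subsets_def)
    have H: "D {p} {q} \<ge> 0 \<and> (D {p} {q} = 0 \<longleftrightarrow> {p} = {q}) \<and> D {p} {q} = D {q} {p}"
      using bspec[OF bspec[OF Dsym[unfolded is_symmetric_on_def] pF] qF] .
    show "0 \<le> d p q" using H unfolding d_def by blast
    show "d p q = 0 \<longleftrightarrow> p = q" using conjunct1[OF conjunct2[OF H]] unfolding d_def by simp
    show "d p q = d q p" using H unfolding d_def by blast
  qed
  show ?thesis
    unfolding semi_metrizable_def
  proof (intro exI[of _ d] conjI ballI allI impI)
    show "is_symmetric_on (topspace X) d" by (rule dsym)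
  next
    fix x e assume x: "x \<in> topspace X" and e: "(0::real) < e"
    obtain V where V: "openin X V" "x \<in> V" "V \<subseteq> {q \<in> topspace X. D {x} {q} < e}"
      using main_nbhd[OF haus Dsym Dop reg cp x e] by blast
    have "V \<subseteq> sball X d x e" using V(3) unfolding sball_def d_def by blast
    then show "\<exists>V. openin X V \<and> x \<in> V \<and> V \<subseteq> sball X d x e" using V by blast
  next
    fix x U assume x: "x \<in> topspace X" and U: "openin X U \<and> x \<in> U"
    obtain \<epsilon> where eps: "\<epsilon> > 0" "\<forall>q\<in>topspace X. D {x} {q} < \<epsilon> \<longrightarrow> q \<in> U"
      using S1[OF haus Dsym Dop conjunct1[OF U] conjunct2[OF U]] by blast
    have "sball X d x \<epsilon> \<subseteq> U" using eps(2) unfolding sball_def d_def by blast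
    then show "\<exists>e>0. sball X d x e \<subseteq> U" using eps(1) by blast
  qed
qed

theorem theorem4p11:
  fixes X :: "'a topology"
  assumes "regular_space X" and "Hausdorff_space X" and "countable_pseudocharacter X"
  shows "(semi_metrizable X \<longleftrightarrow> symmetrizable (vietoris_fin X))
       \<and> (symmetrizable (vietoris_fin X) \<longleftrightarrow> semi_metrizable (vietoris_fin X))"
proof -
  have 1: "semi_metrizable X \<Longrightarrow> semi_metrizable (vietoris_fin X)" by (rule semi_imp_vt_semi)
  have 2: "semi_metrizable (vietoris_fin X) \<Longrightarrow> symmetrizable (vietoris_fin X)" by (rule semi_imp_sym)
  have 3: "symmetrizable (vietoris_fin X) \<Longrightarrow> semi_metrizable X"
    using sym_vt_imp_semi[OF assms] .
  show ?thesis using 1 2 3 by blast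
qed

end
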